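(* Let $\mathcal{X}$ be a finite set and $\underline{Q}$ a lower transition rate operator on $\mathcal{L}(\mathcal{X})$. Then for any $t\ge0$: $\underline{T}_t$ is regularly absorbing if and only if it is 1-step absorbing.
   Context: $\mathcal{L}(\mathcal{X})$ is the set of real-valued functions on $\mathcal{X}$ with pointwise operations and order, real constants identified with constant functions, $\mathbb{I}_A$ the indicator of $A\subseteq\mathcal{X}$, $\mathbb{I}_x\coloneqq\mathbb{I}_{\{x\}}$; $\mathbb{N}=\{1,2,\dots\}$. A lower transition rate operator is a map $\underline{Q}\colon\mathcal{L}(\mathcal{X})\to\mathcal{L}(\mathcal{X})$ such that for all $f,g$, $\lambda\ge0$, $\mu\in\mathbb{R}$, $x,y\in\mathcal{X}$: $\underline{Q}(\mu)=0$; $\underline{Q}(f+g)\ge\underline{Q}f+\underline{Q}g$; $\underline{Q}(\lambda f)=\lambda\underline{Q}f$; $x\ne y\Rightarrow\underline{Q}(\mathbb{I}_y)(x)\ge0$. For each $f$, $t\mapsto\underline{T}_tf$ is the unique solution on $[0,\infty)$ of $\frac{d}{dt}\underline{T}_tf=\underline{Q}\,\underline{T}_tf$ with $\underline{T}_0f=f$ (existence and uniqueness are known); $\underline{T}_t$ denotes the operator $f\mapsto\underline{T}_tf$. For an operator $\underline{T}$ let $\overline{T}f\coloneqq-\underline{T}(-f)$ and powers denote composition. $\underline{T}$ is regularly absorbing if $\mathcal{X}_{\mathrm{RA}}\coloneqq\{x\colon\exists n\in\mathbb{N},\ \min\overline{T}^n\mathbb{I}_x>0\}\neq\emptyset$ and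 for every $x\in\mathcal{X}\setminus\mathcal{X}_{\mathrm{RA}}$ there is $n\in\mathbb{N}$ with $\underline{T}^n\mathbb{I}_{\mathcal{X}_{\mathrm{RA}}}(x)>0$. $\underline{T}$ is 1-step absorbing if $\mathcal{X}_{\mathrm{1A}}\coloneqq\{x\colon\min\overline{T}\mathbb{I}_x>0\}\neq\emptyset$ and $\underline{T}\mathbb{I}_{\mathcal{X}_{\mathrm{1A}}}(x)>0$ for every $x\in\mathcal{X}\setminus\mathcal{X}_{\mathrm{1A}}$. *)

theory Defs
  imports "HOL-Analysis.Analysis"
begin

type_synonym 'x gamble = "'x \<Rightarrow> real"

definition lower_rate_op :: "('x gamble \<Rightarrow> 'x gamble) \<Rightarrow> bool" where
  "lower_rate_op Q \<longleftrightarrow>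
     (\<forall>\<mu>::real. Q (\<lambda>_. \<mu>) = (\<lambda>_. 0)) \<and>
     (\<forall>f g x. Q (\<lambda>y. f y + g y) x \<ge> Q f x + Q g x) \<and>
     (\<forall>(c::real) f. c \<ge> 0 \<longrightarrow> Q (\<lambda>y. c * f y) = (\<lambda>x. c * Q f x)) \<and>
     (\<forall>x y. x \<noteq> y \<longrightarrow> Q (indicator {y}) x \<ge> 0)"

definition generated_by :: "(real \<Rightarrow> 'x gamble \<Rightarrow> 'x gamble) \<Rightarrow> ('x gamble \<Rightarrow> 'x gamble) \<Rightarrow> bool" where
  "generated_by T Q \<longleftrightarrow>
     (\<forall>f. T 0 f = f \<and>
       (\<forall>t\<ge>0. \<forall>x. ((\<lambda>s. T s f x) has_real_derivative Q (T t f) x) (at t within {0..})))"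

definition upper_op :: "('x gamble \<Rightarrow> 'x gamble) \<Rightarrow> 'x gamble \<Rightarrow> 'x gamble" where
  "upper_op T f = (\<lambda>x. - T (\<lambda>y. - f y) x)"

definition X_RA :: "('x::finite gamble \<Rightarrow> 'x gamble) \<Rightarrow> 'x set" where
  "X_RA T = {x. \<exists>n::nat. n \<ge> 1 \<and> Min (range (((upper_op T) ^^ n) (indicator {x}))) > 0}"

definition regularly_absorbing :: "('x::finite gamble \<Rightarrow> 'x gamble) \<Rightarrow> bool" where
  "regularly_absorbing T \<longleftrightarrow> X_RA T \<noteq> {} \<and>
     (\<forall>x \<in> UNIV - X_RA T. \<exists>n::nat. n \<ge> 1 \<and> (T ^^ n) (indicator (X_RA T)) x > 0)"

definition X_1A :: "('x::finite gamble \<Rightarrow> 'x gamble) \<Rightarrow> 'x set" where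
  "X_1A T = {x. Min (range (upper_op T (indicator {x}))) > 0}"

definition one_step_absorbing :: "('x::finite gamble \<Rightarrow> 'x gamble) \<Rightarrow> bool" where
  "one_step_absorbing T \<longleftrightarrow> X_1A T \<noteq> {} \<and>
     (\<forall>x \<in> UNIV - X_1A T. T (indicator (X_1A T)) x > 0)"

end

theory Submission
  imports Defs
begin

lemma Q_const: "lower_rate_op Q \<Longrightarrow> Q (\<lambda>_. \<mu>) x = 0"
  unfolding lower_rate_op_def by metis

lemma Q_super: "lower_rate_op Q \<Longrightarrow> Q (\<lambda>y. f y + g y) x \<ge> Q f x + Q g x"
  unfolding lower_rate_op_def by blast

lemma Q_hom: "lower_rate_op Q \<Longrightarrow> c \<ge> 0 \<Longrightarrow> Q (\<lambda>y. c * f y) = (\<lambda>x. c * Q f x)"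
  unfolding lower_rate_op_def by blast

lemma Q_off: "lower_rate_op Q \<Longrightarrow> x \<noteq> y \<Longrightarrow> Q (indicator {y}) x \<ge> 0"
  unfolding lower_rate_op_def by blast

lemma Q_sum:
  assumes Q: "lower_rate_op Q" and "finite S"
  shows "Q (\<lambda>z. \<Sum>y\<in>S. h y z) x \<ge> (\<Sum>y\<in>S. Q (h y) x)"
  using \<open>finite S\<close>
proof (induction S rule: finite_induct)
  case empty
  then show ?case using Q_const[OF Q, of 0 x] by simp
next
  case (insert a S)
  have "Q (\<lambda>z. h a z + (\<Sum>y\<in>S. h y z)) x \<ge> Q (h a) x + Q (\<lambda>z. \<Sum>y\<in>S. h y z) x"
    by (rule Q_super[OF Q])
  then show ?case using insert by simp
qed

lemma Q_diag:
  fixes Q :: "'x::finite gamble \<Rightarrow> 'x gamble"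
  assumes Q: "lower_rate_op Q" and g: "\<And>y. g y \<ge> 0"
  shows "Q g x \<ge> g x * Q (indicator {x}) x"
proof -
  have geq: "g = (\<lambda>z. \<Sum>y\<in>UNIV. g y * indicator {y} z)"
    by (auto simp: indicator_def)
  have "Q g x \<ge> (\<Sum>y\<in>UNIV. Q (\<lambda>z. g y * indicator {y} z) x)"
    by (subst geq, rule Q_sum[OF Q], simp)
  also have "(\<Sum>y\<in>UNIV. Q (\<lambda>z. g y * indicator {y} z) x) = (\<Sum>y\<in>UNIV. g y * Q (indicator {y}) x)"
    using Q_hom[OF Q g] by simp
  also have "\<dots> = g x * Q (indicator {x}) x + (\<Sum>y\<in>UNIV-{x}. g y * Q (indicator {y}) x)"
    by (simp add: sum.remove)
  also have "\<dots> \<ge> g x * Q (indicator {x}) x"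
  proof -
    have "(\<Sum>y\<in>UNIV-{x}. g y * Q (indicator {y}) x) \<ge> 0"
    proof (rule sum_nonneg)
      fix y assume "y \<in> UNIV - {x}" then have xy: "x \<noteq> y" by auto
      show "0 \<le> g y * Q (indicator {y}) x" using Q_off[OF Q xy] g by simp
    qed
    then show ?thesis by simp
  qed
  finally show ?thesis .
qed

lemma Q_zero_pt:
  fixes Q :: "'x::finite gamble \<Rightarrow> 'x gamble"
  assumes Q: "lower_rate_op Q" and g: "\<And>y. g y \<ge> 0" and "g x = 0"
  shows "Q g x \<ge> 0"
  using Q_diag[where Q=Q and g=g and x=x, OF Q g] \<open>g x = 0\<close> by simp

definition Lc :: "('x::finite gamble \<Rightarrow> 'x gamble) \<Rightarrow> real" where
  "Lc Q = (\<Sum>x\<in>UNIV. \<bar>Q (indicator {x}) x\<bar>)"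

lemma Lc_nonneg: "Lc Q \<ge> 0" unfolding Lc_def by (auto intro: sum_nonneg)

lemma Q_lazy:
  fixes Q :: "'x::finite gamble \<Rightarrow> 'x gamble"
  assumes Q: "lower_rate_op Q" and g: "\<And>y. g y \<ge> 0"
  shows "Q g x \<ge> - Lc Q * g x"
proof -
  have "\<bar>Q (indicator {x}) x\<bar> \<le> Lc Q" unfolding Lc_def
    by (rule member_le_sum) auto
  then have "Q (indicator {x}) x \<ge> - Lc Q" by linarith
  then have "g x * Q (indicator {x}) x \<ge> g x * (- Lc Q)"
    using g by (intro mult_left_mono) auto
  moreover have "- Lc Q * g x = g x * (- Lc Q)" by simp
  ultimately show ?thesis using Q_diag[where Q=Q and g=g and x=x, OF Q g] by linarith
qed

lemma comparison:
  fixes Q :: "'x::finite gamble \<Rightarrow> 'x gamble"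
    and w v w' v' :: "real \<Rightarrow> 'x \<Rightarrow> real"
  assumes Q: "lower_rate_op Q"
    and dw: "\<And>s x. s \<ge> 0 \<Longrightarrow> ((\<lambda>r. w r x) has_real_derivative w' s x) (at s within {0..})"
    and dv: "\<And>s x. s \<ge> 0 \<Longrightarrow> ((\<lambda>r. v r x) has_real_derivative v' s x) (at s within {0..})"
    and sub: "\<And>s x. s \<ge> 0 \<Longrightarrow> w' s x \<le> Q (w s) x"
    and sup: "\<And>s x. s \<ge> 0 \<Longrightarrow> v' s x \<ge> Q (v s) x"
    and init: "\<And>x. w 0 x \<le> v 0 x"
    and s: "s \<ge> 0"
  shows "w s x \<le> v s x"
proof -
  define d where "d r y = w r y - v r y" for r y
  have key: "d s' y - \<epsilon> * exp s' < 0" if eps: "\<epsilon> > 0" and s': "s' \<ge> 0" for \<epsilon> s' y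
  proof (rule ccontr)
    assume contra: "\<not> (d s' y - \<epsilon> * exp s' < 0)"
    define z where "z r y = d r y - \<epsilon> * exp r" for r y
    have dz: "((\<lambda>r. z r y) has_real_derivative (w' r y - v' r y - \<epsilon> * exp r)) (at r within {0..})"
      if "r \<ge> 0" for r y
    proof -
      have e: "((\<lambda>r. \<epsilon> * exp r) has_real_derivative \<epsilon> * exp r) (at r within {0..})"
        by (rule DERIV_cmult[OF has_field_derivative_at_within[OF DERIV_exp]])
      show ?thesis unfolding z_def d_def
        by (rule DERIV_diff[OF DERIV_diff[OF dw[OF that] dv[OF that]] e])
    qed
    define B where "B = {r. r \<ge> 0 \<and> (\<exists>y. z r y \<ge> 0)}"
    have "z s' y \<ge> 0" using contra unfolding z_def by simp
    then have "s' \<in> B" unfolding B_def using s' by blast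
    then have Bne: "B \<noteq> {}" by blast
    have bdd: "bdd_below B" unfolding B_def by (auto intro: bdd_belowI[of _ 0])
    have cont: "continuous_on {0..} (\<lambda>r. z r y)" for y
      unfolding continuous_on_eq_continuous_within
    proof (intro ballI)
      fix r :: real assume "r \<in> {0..}"
      then show "continuous (at r within {0..}) (\<lambda>r. z r y)"
        using DERIV_continuous[OF dz[of r y]] by simp
    qed
    have Beq: "B = (\<Union>y. {0::real..} \<inter> (\<lambda>r. z r y) -` {0..})"
      unfolding B_def by auto
    have "closed B" unfolding Beq
      by (intro closed_UN ballI continuous_closed_preimage cont) auto
    define s0 where "s0 = Inf B"
    have s0B: "s0 \<in> B" unfolding s0_def using closed_contains_Inf Bne bdd \<open>closed B\<close> by blast
    have s0low: "s0 \<le> r" if "r \<in> B" for r unfolding s0_def using that bdd by (rule cInf_lower)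
    obtain y0 where y0: "z s0 y0 \<ge> 0" and s0nn: "s0 \<ge> 0" using s0B unfolding B_def by blast
    define m where "m = Max (range (d s0))"
    have "m \<in> range (d s0)" unfolding m_def by (rule Max_in) auto
    then obtain x0 where x0: "d s0 x0 = m" by auto
    have dle: "d s0 y \<le> m" for y unfolding m_def by (rule Max_ge) auto
    have zx0: "z s0 x0 \<ge> 0" using y0 dle[of y0] x0 unfolding z_def by linarith
    have s0pos: "s0 > 0"
    proof (rule ccontr)
      assume "\<not> s0 > 0" then have "s0 = 0" using s0nn by simp
      then show False using zx0 init[of x0] eps unfolding z_def d_def by simp
    qed
    define g where "g y = m - d s0 y" for y
    have gnn: "g y \<ge> 0" for y using dle unfolding g_def by simp
    have gx0: "g x0 = 0" using x0 unfolding g_def by simp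
    have Qg: "Q g x0 \<ge> 0" using Q_zero_pt[where Q=Q and g=g and x=x0, OF Q gnn gx0] .
    have vw: "(\<lambda>y. v s0 y - w s0 y) = (\<lambda>y. g y + (\<lambda>_. - m) y)"
      unfolding g_def d_def by auto
    have "Q (\<lambda>y. v s0 y - w s0 y) x0 \<ge> Q g x0 + Q (\<lambda>_. - m) x0"
      unfolding vw by (rule Q_super[OF Q])
    then have Qvw: "Q (\<lambda>y. v s0 y - w s0 y) x0 \<ge> 0" using Qg Q_const[OF Q] by simp
    have "Q (\<lambda>y. w s0 y + (v s0 y - w s0 y)) x0 \<ge> Q (w s0) x0 + Q (\<lambda>y. v s0 y - w s0 y) x0"
      by (rule Q_super[OF Q])
    then have "Q (v s0) x0 \<ge> Q (w s0) x0" using Qvw by simp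
    then have "w' s0 x0 - v' s0 x0 \<le> 0" using sub[OF s0nn, of x0] sup[OF s0nn, of x0] by linarith
    moreover have "\<epsilon> * exp s0 > 0" using eps by simp
    ultimately have neg: "w' s0 x0 - v' s0 x0 - \<epsilon> * exp s0 < 0" by linarith
    have "((\<lambda>r. z r x0) has_real_derivative (w' s0 x0 - v' s0 x0 - \<epsilon> * exp s0)) (at s0 within {0<..})"
      by (rule DERIV_subset[OF dz[OF s0nn]]) auto
    then have "DERIV (\<lambda>r. z r x0) s0 :> (w' s0 x0 - v' s0 x0 - \<epsilon> * exp s0)"
      using at_within_open[of s0 "{0<..}"] s0pos by simp
    from DERIV_neg_dec_left[OF this neg] obtain dd where dd: "dd > 0"
      and lt: "\<forall>h>0. h < dd \<longrightarrow> z s0 x0 < z (s0 - h) x0" by blast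
    define h where "h = min dd s0 / 2"
    have h: "h > 0" "h < dd" "h \<le> s0" using dd s0pos unfolding h_def by auto
    have "z s0 x0 < z (s0 - h) x0" using lt h by blast
    then have "z (s0 - h) x0 > 0" using zx0 by linarith
    then have "s0 - h \<in> B" unfolding B_def using h by (auto intro!: exI[of _ x0])
    then have "s0 \<le> s0 - h" by (rule s0low)
    then show False using h by linarith
  qed
  show ?thesis
  proof (rule ccontr)
    assume "\<not> ?thesis"
    then have dp: "d s x > 0" unfolding d_def by simp
    define e where "e = d s x / (2 * exp s)"
    have "e > 0" unfolding e_def using dp by simp
    from key[OF this s, of x] have "d s x - e * exp s < 0" .
    moreover have "e * exp s = d s x / 2" unfolding e_def by simp
    ultimately show False using dp by simp
  qed
qed


lemma exp_deriv: "((\<lambda>r. c * exp (- L * r)) has_real_derivative c * (- L * exp (- L * s))) (at s within S)"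
  by (rule derivative_eq_intros refl | simp)+

lemma shift_deriv: "((\<lambda>r. r + (b::real)) has_real_derivative 1) (at s within S)"
  by (rule derivative_eq_intros refl | simp)+

lemma gen_deriv: "generated_by T Q \<Longrightarrow> s \<ge> 0 \<Longrightarrow>
   ((\<lambda>r. T r f x) has_real_derivative Q (T s f) x) (at s within {0..})"
  unfolding generated_by_def by blast

lemma gen_0: "generated_by T Q \<Longrightarrow> T 0 f = f"
  unfolding generated_by_def by blast

lemma uniq:
  fixes Q :: "'x::finite gamble \<Rightarrow> 'x gamble"
  assumes Q: "lower_rate_op Q" and G: "generated_by T Q"
    and du: "\<And>s x. s \<ge> 0 \<Longrightarrow> ((\<lambda>r. u r x) has_real_derivative Q (u s) x) (at s within {0..})"
    and u0: "u 0 = f" and s: "s \<ge> 0"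
  shows "u s = T s f"
proof
  fix x
  have a: "u s x \<le> T s f x"
    by (rule comparison[where Q=Q and w=u and w'="\<lambda>s x. Q (u s) x"
          and v="\<lambda>r. T r f" and v'="\<lambda>s x. Q (T s f) x", OF Q du gen_deriv[OF G]])
       (auto simp: u0 gen_0[OF G] s)
  have b: "T s f x \<le> u s x"
    by (rule comparison[where Q=Q and v=u and v'="\<lambda>s x. Q (u s) x"
          and w="\<lambda>r. T r f" and w'="\<lambda>s x. Q (T s f) x", OF Q gen_deriv[OF G] du])
       (auto simp: u0 gen_0[OF G] s)
  from a b show "u s x = T s f x" by linarith
qed

lemma semigroup:
  fixes Q :: "'x::finite gamble \<Rightarrow> 'x gamble"
  assumes Q: "lower_rate_op Q" and G: "generated_by T Q" and b: "b \<ge> 0" and s: "s \<ge> 0"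
  shows "T (s + b) f = T s (T b f)"
proof -
  have du: "((\<lambda>r. T (r + b) f x) has_real_derivative Q (T (r + b) f) x) (at r within {0..})"
    if r: "r \<ge> 0" for r x
  proof -
    have d1: "((\<lambda>r. T r f x) has_real_derivative Q (T (r + b) f) x) (at (r + b) within ((\<lambda>r. r + b) ` {0..}))"
      by (rule DERIV_subset[OF gen_deriv[OF G]]) (use r b in auto)
    from DERIV_image_chain[OF d1 shift_deriv[of b r "{0..}"]]
    show ?thesis by (simp add: o_def)
  qed
  show ?thesis
    using uniq[where Q=Q and T=T and u="\<lambda>r. T (r + b) f" and f="T b f", OF Q G du] s
    by simp
qed

lemma T_mono:
  fixes Q :: "'x::finite gamble \<Rightarrow> 'x gamble"
  assumes Q: "lower_rate_op Q" and G: "generated_by T Q" and fg: "\<And>x. f x \<le> g x" and s: "s \<ge> 0"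
  shows "T s f x \<le> T s g x"
  by (rule comparison[where Q=Q and w="\<lambda>r. T r f" and w'="\<lambda>s x. Q (T s f) x"
          and v="\<lambda>r. T r g" and v'="\<lambda>s x. Q (T s g) x", OF Q gen_deriv[OF G] gen_deriv[OF G]])
     (auto simp: gen_0[OF G] s fg)

lemma T_hom:
  fixes Q :: "'x::finite gamble \<Rightarrow> 'x gamble"
  assumes Q: "lower_rate_op Q" and G: "generated_by T Q" and c: "c \<ge> 0" and s: "s \<ge> 0"
  shows "T s (\<lambda>y. c * f y) = (\<lambda>x. c * T s f x)"
proof -
  have du: "((\<lambda>r. c * T r f x) has_real_derivative Q (\<lambda>x. c * T r f x) x) (at r within {0..})"
    if r: "r \<ge> 0" for r x
    using DERIV_cmult[OF gen_deriv[OF G r, of f x], of c] Q_hom[OF Q c, of "T r f"] by simp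
  have "(\<lambda>x. c * T s f x) = T s (\<lambda>y. c * f y)"
    using uniq[where Q=Q and T=T and u="\<lambda>r x. c * T r f x" and f="\<lambda>y. c * f y", OF Q G du] s
    by (simp add: gen_0[OF G])
  then show ?thesis by simp
qed

lemma T_super:
  fixes Q :: "'x::finite gamble \<Rightarrow> 'x gamble"
  assumes Q: "lower_rate_op Q" and G: "generated_by T Q" and s: "s \<ge> 0"
  shows "T s f x + T s g x \<le> T s (\<lambda>y. f y + g y) x"
proof -
  have dw: "((\<lambda>r. T r f x + T r g x) has_real_derivative Q (T r f) x + Q (T r g) x) (at r within {0..})"
    if r: "r \<ge> 0" for r x
    by (rule DERIV_add[OF gen_deriv[OF G r] gen_deriv[OF G r]])
  show ?thesis
    by (rule comparison[where Q=Q and w="\<lambda>r x. T r f x + T r g x" and w'="\<lambda>s x. Q (T s f) x + Q (T s g) x"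
          and v="\<lambda>r. T r (\<lambda>y. f y + g y)" and v'="\<lambda>s x. Q (T s (\<lambda>y. f y + g y)) x",
          OF Q dw gen_deriv[OF G]])
       (auto simp: gen_0[OF G] s Q_super[OF Q])
qed

lemma T_lazy:
  fixes Q :: "'x::finite gamble \<Rightarrow> 'x gamble"
  assumes Q: "lower_rate_op Q" and G: "generated_by T Q" and f: "\<And>y. f y \<ge> 0" and s: "s \<ge> 0"
  shows "exp (- Lc Q * s) * f x \<le> T s f x"
proof -
  define L where "L = Lc Q"
  have dw: "((\<lambda>r. f x * exp (- L * r)) has_real_derivative f x * (- L * exp (- L * r))) (at r within {0..})"
    for r x by (rule exp_deriv)
  have sub: "f x * (- L * exp (- L * r)) \<le> Q (\<lambda>x. f x * exp (- L * r)) x" if "r \<ge> 0" for r x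
  proof -
    have "Q (\<lambda>x. f x * exp (- L * r)) x \<ge> - Lc Q * (f x * exp (- L * r))"
      by (rule Q_lazy[OF Q]) (use f in simp)
    then show ?thesis unfolding L_def by (simp add: algebra_simps)
  qed
  have "f x * exp (- L * s) \<le> T s f x"
    by (rule comparison[where Q=Q and w="\<lambda>r x. f x * exp (- L * r)" and w'="\<lambda>r x. f x * (- L * exp (- L * r))"
          and v="\<lambda>r. T r f" and v'="\<lambda>s x. Q (T s f) x",
          OF Q dw gen_deriv[OF G] sub])
       (auto simp: gen_0[OF G] s)
  then show ?thesis unfolding L_def by (simp add: mult.commute)
qed


definition mono_op :: "('x gamble \<Rightarrow> 'x gamble) \<Rightarrow> bool" where
  "mono_op P \<longleftrightarrow> (\<forall>f g. (\<forall>x. f x \<le> g x) \<longrightarrow> (\<forall>x. P f x \<le> P g x))"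
definition hom_op :: "('x gamble \<Rightarrow> 'x gamble) \<Rightarrow> bool" where
  "hom_op P \<longleftrightarrow> (\<forall>c f. c \<ge> 0 \<longrightarrow> P (\<lambda>y. c * f y) = (\<lambda>x. c * P f x))"
definition lazy_op :: "('x gamble \<Rightarrow> 'x gamble) \<Rightarrow> bool" where
  "lazy_op P \<longleftrightarrow> (\<exists>\<delta>>0. \<forall>f. (\<forall>x. f x \<ge> 0) \<longrightarrow> (\<forall>x. P f x \<ge> \<delta> * f x))"
definition super_op :: "('x gamble \<Rightarrow> 'x gamble) \<Rightarrow> bool" where
  "super_op P \<longleftrightarrow> (\<forall>f g x. P f x + P g x \<le> P (\<lambda>y. f y + g y) x)"
definition pos :: "('x gamble \<Rightarrow> 'x gamble) \<Rightarrow> 'x set \<Rightarrow> 'x set" where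
  "pos P A = {x. P (indicator A) x > 0}"

lemma monoD: "mono_op P \<Longrightarrow> (\<And>x. f x \<le> g x) \<Longrightarrow> P f x \<le> P g x"
  unfolding mono_op_def by blast
lemma homD: "hom_op P \<Longrightarrow> c \<ge> 0 \<Longrightarrow> P (\<lambda>y. c * f y) = (\<lambda>x. c * P f x)"
  unfolding hom_op_def by blast
lemma superD: "super_op P \<Longrightarrow> P f x + P g x \<le> P (\<lambda>y. f y + g y) x"
  unfolding super_op_def by blast

lemma hom_zero: "hom_op P \<Longrightarrow> P (\<lambda>_. 0) = (\<lambda>_. 0)"
  unfolding hom_op_def by (erule allE[of _ 0], erule allE[of _ "\<lambda>_. 0"]) simp

lemma mono_comp: "mono_op P \<Longrightarrow> mono_op P' \<Longrightarrow> mono_op (P \<circ> P')"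
  unfolding mono_op_def by simp
lemma hom_comp: "hom_op P \<Longrightarrow> hom_op P' \<Longrightarrow> hom_op (P \<circ> P')"
  unfolding hom_op_def by simp
lemma mono_pow: "mono_op P \<Longrightarrow> mono_op (P ^^ n)"
  by (induction n) (auto simp: mono_op_def)
lemma hom_pow: "hom_op P \<Longrightarrow> hom_op (P ^^ n)"
  by (induction n) (auto simp: hom_op_def)

lemma support:
  fixes P :: "'x::finite gamble \<Rightarrow> 'x gamble"
  assumes m: "mono_op P" and h: "hom_op P" and f: "\<And>y. f y \<ge> 0"
  shows "P f x > 0 \<longleftrightarrow> P (indicator {y. f y > 0}) x > 0"
proof (cases "{y. f y > 0} = {}")
  case True
  then have "f = (\<lambda>_. 0)" using f by (auto intro!: ext simp: not_less order.antisym)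
  moreover have "indicator {y. f y > 0} = (\<lambda>_::'x. 0::real)" using True by auto
  ultimately show ?thesis by simp
next
  case False
  define S where "S = {y. f y > 0}"
  have fin: "finite (f ` S)" by simp
  have ne: "f ` S \<noteq> {}" using False unfolding S_def by auto
  define c where "c = Min (f ` S)"
  define M where "M = Max (f ` S)"
  have cpos: "c > 0" unfolding c_def using fin ne by (auto simp: Min_gr_iff S_def)
  obtain y0 where y0: "y0 \<in> S" using False unfolding S_def by blast
  have "f y0 \<le> M" unfolding M_def using y0 by (intro Max_ge) auto
  then have Mpos: "M > 0" using y0 unfolding S_def by simp
  have lo: "c * indicator S y \<le> f y" for y
  proof (cases "y \<in> S")
    case True
    then have "c \<le> f y" unfolding c_def by (intro Min_le) auto
    then show ?thesis using True by simp
  next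
    case False then show ?thesis using f[of y] by simp
  qed
  have hi: "f y \<le> M * indicator S y" for y
  proof (cases "y \<in> S")
    case True
    then have "f y \<le> M" unfolding M_def by (intro Max_ge) auto
    then show ?thesis using True by simp
  next
    case False then show ?thesis unfolding S_def by simp
  qed
  have "P (\<lambda>y. c * indicator S y) x \<le> P f x"
    by (rule monoD[OF m lo])
  moreover have "P (\<lambda>y. c * indicator S y) = (\<lambda>x. c * P (indicator S) x)"
    using cpos by (intro homD[OF h]) simp
  ultimately have A: "c * P (indicator S) x \<le> P f x" by simp
  have "P f x \<le> P (\<lambda>y. M * indicator S y) x"
    by (rule monoD[OF m hi])
  moreover have "P (\<lambda>y. M * indicator S y) = (\<lambda>x. M * P (indicator S) x)"
    using Mpos by (intro homD[OF h]) simp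
  ultimately have B: "P f x \<le> M * P (indicator S) x" by simp
  show ?thesis unfolding S_def[symmetric]
  proof
    assume "P f x > 0"
    then have "M * P (indicator S) x > 0" using B by linarith
    then show "P (indicator S) x > 0" using Mpos by (simp add: zero_less_mult_iff)
  next
    assume "P (indicator S) x > 0"
    then have "c * P (indicator S) x > 0" using cpos by simp
    then show "P f x > 0" using A by linarith
  qed
qed

lemma ind_nonneg_op:
  assumes "mono_op P" "hom_op P"
  shows "P (indicator A) x \<ge> 0"
proof -
  have "P (\<lambda>_. 0) x \<le> P (indicator A) x"
    by (rule monoD[OF assms(1)]) simp
  then show ?thesis using hom_zero[OF assms(2)] by simp
qed

lemma pos_comp:
  fixes P :: "'x::finite gamble \<Rightarrow> 'x gamble"
  assumes "mono_op P" "hom_op P" "mono_op P'" "hom_op P'"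
  shows "pos (P \<circ> P') A = pos P (pos P' A)"
proof -
  have "{y. P' (indicator A) y > 0} = pos P' A" unfolding pos_def by simp
  then show ?thesis
    unfolding pos_def
    using support[OF assms(1,2), of "P' (indicator A)"] ind_nonneg_op[OF assms(3,4)]
    by auto
qed

lemma pos_pow:
  fixes P :: "'x::finite gamble \<Rightarrow> 'x gamble"
  assumes "mono_op P" "hom_op P"
  shows "pos (P ^^ n) A = (pos P ^^ n) A"
proof (induction n)
  case 0
  then show ?case by (simp add: pos_def indicator_def)
next
  case (Suc n)
  have e1: "pos (P ^^ Suc n) A = pos P (pos (P ^^ n) A)"
    using pos_comp[OF assms mono_pow[OF assms(1)] hom_pow[OF assms(2)]]
    by (simp only: funpow.simps(2))
  have e2: "(pos P ^^ Suc n) A = pos P ((pos P ^^ n) A)" by simp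
  show ?case by (simp only: e1 e2 Suc.IH)
qed

lemma pos_incr:
  assumes "lazy_op P"
  shows "A \<subseteq> pos P A"
proof
  fix x assume x: "x \<in> A"
  obtain \<delta> where d: "\<delta> > 0" "\<forall>f. (\<forall>x. f x \<ge> 0) \<longrightarrow> (\<forall>x. P f x \<ge> \<delta> * f x)"
    using assms unfolding lazy_op_def by blast
  then have "P (indicator A) x \<ge> \<delta> * indicator A x" by auto
  then show "x \<in> pos P A" using x d(1) unfolding pos_def by simp
qed

lemma chain_incr:
  fixes F :: "'a set \<Rightarrow> 'a set"
  assumes "\<And>B. B \<subseteq> F B"
  shows "(F ^^ k) A \<subseteq> (F ^^ (k + j)) A"
proof (induction j)
  case 0 then show ?case by simp
next
  case (Suc j)
  then show ?case using assms[of "(F ^^ (k + j)) A"] by simp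
qed

lemma fix_stays:
  fixes F :: "'a set \<Rightarrow> 'a set"
  assumes "(F ^^ Suc k) A = (F ^^ k) A"
  shows "(F ^^ (k + j)) A = (F ^^ k) A"
proof (induction j)
  case 0 then show ?case by simp
next
  case (Suc j)
  have "(F ^^ (k + Suc j)) A = F ((F ^^ (k + j)) A)" by simp
  also have "\<dots> = F ((F ^^ k) A)" using Suc by simp
  also have "\<dots> = (F ^^ k) A" using assms by simp
  finally show ?case .
qed

lemma card_grow:
  fixes F :: "'x::finite set \<Rightarrow> 'x set"
  assumes inc: "\<And>B. B \<subseteq> F B" and strict: "\<forall>k<n. (F ^^ Suc k) A \<noteq> (F ^^ k) A"
  shows "card ((F ^^ n) A) \<ge> n"
  using strict
proof (induction n)
  case 0 then show ?case by simp
next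
  case (Suc n)
  have "(F ^^ n) A \<subset> (F ^^ Suc n) A"
    using inc[of "(F ^^ n) A"] Suc.prems by auto
  then have "card ((F ^^ n) A) < card ((F ^^ Suc n) A)"
    by (rule psubset_card_mono[rotated]) simp
  moreover have "card ((F ^^ n) A) \<ge> n" using Suc by auto
  ultimately show ?case by simp
qed

lemma stab:
  fixes F :: "'x::finite set \<Rightarrow> 'x set"
  assumes inc: "\<And>B. B \<subseteq> F B" and m: "m \<ge> CARD('x)"
  shows "(F ^^ m) A = (F ^^ CARD('x)) A"
proof -
  define N where "N = CARD('x)"
  have "\<exists>k\<le>N. (F ^^ Suc k) A = (F ^^ k) A"
  proof (rule ccontr)
    assume "\<not> ?thesis"
    then have "\<forall>k<Suc N. (F ^^ Suc k) A \<noteq> (F ^^ k) A" by auto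
    from card_grow[OF inc this] have "card ((F ^^ Suc N) A) \<ge> Suc N" .
    moreover have "card ((F ^^ Suc N) A) \<le> N" unfolding N_def by (rule card_mono) auto
    ultimately show False by simp
  qed
  then obtain k where k: "k \<le> N" "(F ^^ Suc k) A = (F ^^ k) A" by blast
  have "(F ^^ m) A = (F ^^ (k + (m - k))) A" using k m N_def by simp
  also have "\<dots> = (F ^^ k) A" by (rule fix_stays[OF k(2)])
  also have "\<dots> = (F ^^ (k + (N - k))) A" by (rule fix_stays[OF k(2), symmetric])
  also have "\<dots> = (F ^^ N) A" using k by simp
  finally show ?thesis unfolding N_def .
qed

lemma pos_stab:
  fixes P :: "'x::finite gamble \<Rightarrow> 'x gamble"
  assumes "mono_op P" "hom_op P" "lazy_op P" "m \<ge> CARD('x)"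
  shows "pos (P ^^ m) A = pos (P ^^ CARD('x)) A"
  unfolding pos_pow[OF assms(1,2)]
  by (rule stab[OF pos_incr[OF assms(3)] assms(4)])

lemma upper_mono:
  assumes m: "mono_op P" shows "mono_op (upper_op P)"
  unfolding mono_op_def
proof (intro allI impI)
  fix f g :: "'a gamble" and x assume fg: "\<forall>x. f x \<le> g x"
  have "P (\<lambda>y. - g y) x \<le> P (\<lambda>y. - f y) x" by (rule monoD[OF m]) (use fg in simp)
  then show "upper_op P f x \<le> upper_op P g x" unfolding upper_op_def by simp
qed

lemma upper_hom: "hom_op P \<Longrightarrow> hom_op (upper_op P)"
  unfolding hom_op_def upper_op_def
proof (intro allI impI)
  fix c :: real and f :: "'a gamble"
  assume h: "\<forall>c f. 0 \<le> c \<longrightarrow> P (\<lambda>y. c * f y) = (\<lambda>x. c * P f x)" and c: "0 \<le> c"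
  have e0: "P (\<lambda>y. c * (\<lambda>y. - f y) y) = (\<lambda>x. c * P (\<lambda>y. - f y) x)"
    by (rule homD[OF _ c]) (use h in \<open>simp add: hom_op_def\<close>)
  have e: "P (\<lambda>y. - (c * f y)) = (\<lambda>x. c * P (\<lambda>y. - f y) x)" using e0 by simp
  then show "(\<lambda>x. - P (\<lambda>y. - (c * f y)) x) = (\<lambda>x. c * - P (\<lambda>y. - f y) x)"
    by simp
qed

lemma upper_lazy:
  assumes h: "hom_op P" and s: "super_op P" and l: "lazy_op P"
  shows "lazy_op (upper_op P)"
proof -
  obtain \<delta> where d: "\<delta> > 0" "\<forall>f. (\<forall>x. f x \<ge> 0) \<longrightarrow> (\<forall>x. P f x \<ge> \<delta> * f x)"
    using l unfolding lazy_op_def by blast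
  have "\<forall>x. upper_op P f x \<ge> \<delta> * f x" if f: "\<forall>x. f x \<ge> 0" for f
  proof
    fix x
    have "P f x + P (\<lambda>y. - f y) x \<le> P (\<lambda>y. f y + - f y) x"
      by (rule superD[OF s])
    also have "\<dots> = 0" using hom_zero[OF h] by simp
    finally have "- P (\<lambda>y. - f y) x \<ge> P f x" by simp
    moreover have "\<delta> * f x \<le> P f x" using d f by blast
    ultimately show "upper_op P f x \<ge> \<delta> * f x" unfolding upper_op_def by simp
  qed
  then show ?thesis unfolding lazy_op_def using d(1) by blast
qed

lemma upper_pow: "(upper_op P) ^^ n = upper_op (P ^^ n)"
proof (induction n)
  case 0 then show ?case by (auto simp: upper_op_def)
next
  case (Suc n)
  have "upper_op P ^^ Suc n = upper_op P \<circ> upper_op (P ^^ n)" by (simp add: Suc.IH)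
  also have "\<dots> = upper_op (P ^^ Suc n)"
    by (rule ext, rule ext) (simp add: upper_op_def)
  finally show ?case .
qed


lemma T_ops:
  fixes Q :: "'x::finite gamble \<Rightarrow> 'x gamble"
  assumes Q: "lower_rate_op Q" and G: "generated_by T Q" and s: "s \<ge> 0"
  shows "mono_op (T s)" "hom_op (T s)" "super_op (T s)" "lazy_op (T s)"
proof -
  show "mono_op (T s)" unfolding mono_op_def using T_mono[OF Q G _ s] by blast
  show "hom_op (T s)" unfolding hom_op_def using T_hom[OF Q G _ s] by blast
  show "super_op (T s)" unfolding super_op_def using T_super[OF Q G s] by blast
  have "\<forall>f. (\<forall>x. f x \<ge> 0) \<longrightarrow> (\<forall>x. T s f x \<ge> exp (- Lc Q * s) * f x)"
    using T_lazy[OF Q G _ s] by blast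
  then show "lazy_op (T s)" unfolding lazy_op_def by (intro exI[of _ "exp (- Lc Q * s)"]) simp
qed

lemma T_pow:
  fixes Q :: "'x::finite gamble \<Rightarrow> 'x gamble"
  assumes Q: "lower_rate_op Q" and G: "generated_by T Q" and h: "h \<ge> 0"
  shows "T (real m * h) = T h ^^ m"
proof (induction m)
  case 0
  then show ?case using gen_0[OF G] by (auto intro!: ext)
next
  case (Suc m)
  have e: "T (real (Suc m) * h) = T (h + real m * h)" by (simp add: algebra_simps)
  have bnn: "real m * h \<ge> 0" using h by simp
  have "T (h + real m * h) = T h \<circ> T (real m * h)"
    by (rule ext) (simp add: semigroup[OF Q G bnn h])
  then show ?case using Suc e by simp
qed

lemma key_stab:
  fixes Q :: "'x::finite gamble \<Rightarrow> 'x gamble"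
  assumes Q: "lower_rate_op Q" and G: "generated_by T Q" and t: "t \<ge> 0" and k: "k \<ge> 1"
  shows "pos (T t ^^ k) A = pos (T t) A \<and> pos (upper_op (T t) ^^ k) A = pos (upper_op (T t)) A"
proof (cases "t = 0")
  case True
  have T0: "T t = id" using gen_0[OF G] True by (auto intro!: ext)
  have U0: "upper_op (id :: 'x gamble \<Rightarrow> 'x gamble) = id" by (auto intro!: ext simp: upper_op_def)
  show ?thesis unfolding T0 U0 by simp
next
  case False
  then have tp: "t > 0" using t by simp
  define N where "N = CARD('x)"
  have Npos: "N > 0" unfolding N_def by simp
  define h where "h = t / real N"
  have hp: "h \<ge> 0" unfolding h_def using t by simp
  define R where "R = T h"
  have Rops: "mono_op R" "hom_op R" "super_op R" "lazy_op R"
    unfolding R_def using T_ops[OF Q G hp] by auto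
  have "real N * h = t" unfolding h_def using Npos by simp
  then have TR: "T t = R ^^ N" using T_pow[OF Q G hp, of N] unfolding R_def by simp
  have kN: "N * k \<ge> CARD('x)" unfolding N_def using k by simp
  have p1: "pos (T t ^^ k) A = pos (T t) A"
  proof -
    have "pos (T t ^^ k) A = pos (R ^^ (N * k)) A" unfolding TR funpow_mult ..
    also have "\<dots> = pos (R ^^ CARD('x)) A" by (rule pos_stab[OF Rops(1,2,4) kN])
    also have "\<dots> = pos (T t) A" unfolding TR N_def ..
    finally show ?thesis .
  qed
  have Uops: "mono_op (upper_op R)" "hom_op (upper_op R)" "lazy_op (upper_op R)"
    using upper_mono[OF Rops(1)] upper_hom[OF Rops(2)] upper_lazy[OF Rops(2,3,4)] by auto
  have UT: "upper_op (T t) = upper_op R ^^ N" unfolding TR upper_pow ..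
  have p2: "pos (upper_op (T t) ^^ k) A = pos (upper_op (T t)) A"
  proof -
    have "pos (upper_op (T t) ^^ k) A = pos (upper_op R ^^ (N * k)) A" unfolding UT funpow_mult ..
    also have "\<dots> = pos (upper_op R ^^ CARD('x)) A" by (rule pos_stab[OF Uops kN])
    also have "\<dots> = pos (upper_op (T t)) A" unfolding UT N_def ..
    finally show ?thesis .
  qed
  show ?thesis using p1 p2 by simp
qed

lemma Min_range_pos:
  fixes g :: "'x::finite \<Rightarrow> real"
  shows "Min (range g) > 0 \<longleftrightarrow> (\<forall>y. g y > 0)"
  by (subst Min_gr_iff) auto

theorem proposition10:
  fixes Q :: "'x::finite gamble \<Rightarrow> 'x gamble"
    and T :: "real \<Rightarrow> 'x gamble \<Rightarrow> 'x gamble"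
  assumes "lower_rate_op Q"
    and "generated_by T Q"
    and "t \<ge> 0"
  shows "regularly_absorbing (T t) \<longleftrightarrow> one_step_absorbing (T t)"
proof -
  define S where "S = T t"
  have ks: "\<And>k A. k \<ge> 1 \<Longrightarrow> pos (S ^^ k) A = pos S A \<and> pos (upper_op S ^^ k) A = pos (upper_op S) A"
    unfolding S_def by (rule key_stab[OF assms])
  have X: "X_RA S = X_1A S"
  proof (rule set_eqI)
    fix x
    have "x \<in> X_RA S \<longleftrightarrow> (\<exists>n::nat. n \<ge> 1 \<and> pos (upper_op S ^^ n) {x} = UNIV)"
      unfolding X_RA_def pos_def Min_range_pos by auto
    also have "\<dots> \<longleftrightarrow> pos (upper_op S) {x} = UNIV"
    proof
      assume "\<exists>n::nat. n \<ge> 1 \<and> pos (upper_op S ^^ n) {x} = UNIV"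
      then obtain n :: nat where "n \<ge> 1" "pos (upper_op S ^^ n) {x} = UNIV" by blast
      then show "pos (upper_op S) {x} = UNIV" using ks[of n "{x}"] by simp
    next
      assume "pos (upper_op S) {x} = UNIV"
      then show "\<exists>n::nat. n \<ge> 1 \<and> pos (upper_op S ^^ n) {x} = UNIV"
        by (intro exI[of _ 1]) simp
    qed
    also have "\<dots> \<longleftrightarrow> x \<in> X_1A S"
      unfolding X_1A_def pos_def Min_range_pos by auto
    finally show "x \<in> X_RA S \<longleftrightarrow> x \<in> X_1A S" .
  qed
  have "(\<exists>n::nat. n \<ge> 1 \<and> (S ^^ n) (indicator B) x > 0) \<longleftrightarrow> S (indicator B) x > 0" for B x
  proof
    assume "\<exists>n::nat. n \<ge> 1 \<and> (S ^^ n) (indicator B) x > 0"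
    then obtain n where n: "n \<ge> 1" "x \<in> pos (S ^^ n) B" unfolding pos_def by auto
    then show "S (indicator B) x > 0" using ks[OF n(1), of B] unfolding pos_def by auto
  next
    assume "S (indicator B) x > 0"
    then show "\<exists>n::nat. n \<ge> 1 \<and> (S ^^ n) (indicator B) x > 0" by (intro exI[of _ 1]) simp
  qed
  then show ?thesis
    unfolding S_def[symmetric] regularly_absorbing_def one_step_absorbing_def X by simp
qed

end
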